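(* Let $G$ be a subgroup of $\mathrm{Aut}(T)$, $X$ a minimal compact $G$-space and $\Phi:X\to\mathrm{Sub}(G)$ a lower semi-continuous $G$-equivariant map. Then the map $X\to\mathcal{F}(\partial T)$, $x\mapsto\mathrm{Fix}(\Phi(x))$, is continuous.
   Context: $T$ is a locally finite rooted tree, $\mathrm{Aut}(T)$ its root-fixing automorphism group, and $\partial T$ its boundary. $\mathrm{Sub}(G)$ is the space of subgroups of $G$ with the Chabauty topology (product topology on $\{0,1\}^G$) and conjugation action. $\Phi$ is lower semi-continuous if for every $g\in G$ the set $\{x\in X:g\in\Phi(x)\}$ is open. $\mathcal{F}(\partial T)$ is the space of closed subsets of $\partial T$ with the Hausdorff (Vietoris) topology, and $\mathrm{Fix}(H)$ denotes the set of points of $\partial T$ fixed by $H$. *)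

theory Defs
  imports "HOL-Analysis.Analysis"
begin

text \<open>A rooted tree is a set of finite words over 'a, closed under taking prefixes;
  the root is the empty word, and the children of v are the words v @ [a] in T.\<close>

definition rooted_tree :: "'a list set \<Rightarrow> bool" where
  "rooted_tree T \<longleftrightarrow> [] \<in> T \<and> (\<forall>v a. v @ [a] \<in> T \<longrightarrow> v \<in> T)"

definition locally_finite_tree :: "'a list set \<Rightarrow> bool" where
  "locally_finite_tree T \<longleftrightarrow> rooted_tree T \<and> (\<forall>v\<in>T. finite {a. v @ [a] \<in> T})"

definition tree_adj :: "'a list set \<Rightarrow> 'a list \<Rightarrow> 'a list \<Rightarrow> bool" where
  "tree_adj T v w \<longleftrightarrow> v \<in> T \<and> w \<in> T \<and> (\<exists>a. w = v @ [a] \<or> v = w @ [a])"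

text \<open>Root-fixing automorphisms of T, as maps on all words that are the identity off T.\<close>

definition tree_aut :: "'a list set \<Rightarrow> ('a list \<Rightarrow> 'a list) set" where
  "tree_aut T = {g. bij_betw g T T \<and> g [] = []
      \<and> (\<forall>v\<in>T. \<forall>w\<in>T. tree_adj T v w \<longleftrightarrow> tree_adj T (g v) (g w))
      \<and> (\<forall>v. v \<notin> T \<longrightarrow> g v = v)}"

definition is_subgroup :: "('b \<Rightarrow> 'b) set \<Rightarrow> ('b \<Rightarrow> 'b) set \<Rightarrow> bool" where
  "is_subgroup H A \<longleftrightarrow> H \<subseteq> A \<and> id \<in> H \<and> (\<forall>g\<in>H. \<forall>h\<in>H. g \<circ> h \<in> H)
      \<and> (\<forall>g\<in>H. inv g \<in> H)"

definition tree_boundary :: "'a list set \<Rightarrow> (nat \<Rightarrow> 'a) set" where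
  "tree_boundary T = {\<xi>. \<forall>n. map \<xi> [0..<n] \<in> T}"

definition boundary_topology :: "'a list set \<Rightarrow> (nat \<Rightarrow> 'a) topology" where
  "boundary_topology T =
     subtopology (product_topology (\<lambda>_. discrete_topology UNIV) UNIV) (tree_boundary T)"

text \<open>Points of the boundary fixed by every element of H (h fixes the ray iff it
  fixes every vertex on it).\<close>

definition Fix :: "'a list set \<Rightarrow> ('a list \<Rightarrow> 'a list) set \<Rightarrow> (nat \<Rightarrow> 'a) set" where
  "Fix T H = {\<xi> \<in> tree_boundary T. \<forall>h\<in>H. \<forall>n. h (map \<xi> [0..<n]) = map \<xi> [0..<n]}"

definition vietoris :: "'a topology \<Rightarrow> 'a set topology" where
  "vietoris S = topology_generated_by
     ({{F. closedin S F \<and> F \<subseteq> U} | U. openin S U}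
      \<union> {{F. closedin S F \<and> F \<inter> U \<noteq> {}} | U. openin S U})"

text \<open>G-space: G acts on X by homeomorphisms (G carries the discrete topology).\<close>

definition G_space :: "('b \<Rightarrow> 'b) set \<Rightarrow> 'x topology \<Rightarrow> (('b \<Rightarrow> 'b) \<Rightarrow> 'x \<Rightarrow> 'x) \<Rightarrow> bool" where
  "G_space G X act \<longleftrightarrow>
     (\<forall>g\<in>G. continuous_map X X (act g))
     \<and> (\<forall>x\<in>topspace X. act id x = x)
     \<and> (\<forall>g\<in>G. \<forall>h\<in>G. \<forall>x\<in>topspace X. act (g \<circ> h) x = act g (act h x))"

definition minimal_G_space :: "('b \<Rightarrow> 'b) set \<Rightarrow> 'x topology \<Rightarrow> (('b \<Rightarrow> 'b) \<Rightarrow> 'x \<Rightarrow> 'x) \<Rightarrow> bool" where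
  "minimal_G_space G X act \<longleftrightarrow> G_space G X act \<and>
     (\<forall>Y. closedin X Y \<and> Y \<noteq> {} \<and> (\<forall>g\<in>G. act g ` Y \<subseteq> Y) \<longrightarrow> Y = topspace X)"

end

theory Submission
  imports Defs
begin


lemma topspace_bt: "topspace (boundary_topology T) = tree_boundary T"
  by (simp add: boundary_topology_def)

lemma map_prefix_eq_iff: "map \<eta> [0..<n] = map \<xi> [0..<n] \<longleftrightarrow> (\<forall>i<n. \<eta> i = \<xi> i)"
  by (auto simp: map_eq_conv)

lemma cyl_open_prod:
  "openin (product_topology (\<lambda>_. discrete_topology UNIV) UNIV) {\<eta>. Q (map \<eta> [0..<n])}"
  unfolding openin_product_topology_alt
proof (intro ballI)
  fix \<eta> assume h: "\<eta> \<in> {\<eta>. Q (map \<eta> [0..<n])}"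
  define U where "U = (\<lambda>i::nat. if i < n then {\<eta> i} else UNIV)"
  have "finite {i \<in> UNIV. U i \<noteq> topspace (discrete_topology UNIV)}"
    by (rule finite_subset[of _ "{..<n}"]) (auto simp: U_def)
  moreover have "\<eta> \<in> Pi\<^sub>E UNIV U" by (auto simp: U_def)
  moreover have "Pi\<^sub>E UNIV U \<subseteq> {\<eta>. Q (map \<eta> [0..<n])}"
  proof
    fix \<zeta> assume "\<zeta> \<in> Pi\<^sub>E UNIV U"
    then have "\<forall>i. \<zeta> i \<in> U i" by (auto simp: PiE_iff)
    then have "\<forall>i<n. \<zeta> i = \<eta> i" by (metis U_def singletonD)
    then have "map \<zeta> [0..<n] = map \<eta> [0..<n]" by (simp add: map_prefix_eq_iff)
    then show "\<zeta> \<in> {\<eta>. Q (map \<eta> [0..<n])}" using h by (metis (mono_tags) mem_Collect_eq)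
  qed
  ultimately show "\<exists>U. finite {i \<in> UNIV. U i \<noteq> topspace (discrete_topology UNIV)} \<and>
        (\<forall>i\<in>UNIV. openin (discrete_topology UNIV) (U i)) \<and> \<eta> \<in> Pi\<^sub>E UNIV U \<and> Pi\<^sub>E UNIV U \<subseteq> {\<eta>. Q (map \<eta> [0..<n])}"
    by auto
qed

lemma cyl_open: "openin (boundary_topology T) {\<eta> \<in> tree_boundary T. Q (map \<eta> [0..<n])}"
proof -
  have "{\<eta> \<in> tree_boundary T. Q (map \<eta> [0..<n])} = tree_boundary T \<inter> {\<eta>. Q (map \<eta> [0..<n])}" by auto
  then show ?thesis unfolding boundary_topology_def
    by (metis openin_subtopology_Int2 cyl_open_prod)
qed

lemma open_cyl:
  assumes "openin (boundary_topology T) U" "\<xi> \<in> U"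
  shows "\<exists>n. \<forall>\<eta>\<in>tree_boundary T. map \<eta> [0..<n] = map \<xi> [0..<n] \<longrightarrow> \<eta> \<in> U"
proof -
  obtain V where V: "openin (product_topology (\<lambda>_. discrete_topology UNIV) UNIV) V"
    "U = V \<inter> tree_boundary T"
    using assms(1) unfolding boundary_topology_def openin_subtopology by blast
  have "\<xi> \<in> V" using V assms by auto
  then obtain W where W: "finite {i \<in> UNIV. W i \<noteq> topspace (discrete_topology (UNIV::'a set))}"
     "\<xi> \<in> Pi\<^sub>E UNIV W" "Pi\<^sub>E UNIV W \<subseteq> V"
    using V(1) unfolding openin_product_topology_alt by blast
  define F where "F = {i. W i \<noteq> UNIV}"
  have fF: "finite F" using W(1) by (simp add: F_def)
  obtain n where n: "\<forall>i\<in>F. i < n"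
    using fF finite_nat_bounded by blast
  show ?thesis
  proof (intro exI ballI impI)
    fix \<eta> assume "\<eta> \<in> tree_boundary T" "map \<eta> [0..<n] = map \<xi> [0..<n]"
    then have e: "\<forall>i<n. \<eta> i = \<xi> i" by (simp add: map_prefix_eq_iff)
    have "\<eta> \<in> Pi\<^sub>E UNIV W"
    proof -
      have "\<eta> i \<in> W i" for i
      proof (cases "i < n")
        case True then show ?thesis using e W(2) by (auto simp: PiE_iff)
      next
        case False then have "i \<notin> F" using n by auto
        then show ?thesis by (auto simp: F_def)
      qed
      then show ?thesis by (auto simp: PiE_iff)
    qed
    then show "\<eta> \<in> U" using W(3) V(2) \<open>\<eta> \<in> tree_boundary T\<close> by auto
  qed
qed

lemma closed_Fix: "closedin (boundary_topology T) (Fix T H)"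
  unfolding closedin_def topspace_bt
proof
  show "Fix T H \<subseteq> tree_boundary T" by (auto simp: Fix_def)
  show "openin (boundary_topology T) (tree_boundary T - Fix T H)"
  proof (subst openin_subopen, intro ballI)
    fix \<eta> assume "\<eta> \<in> tree_boundary T - Fix T H"
    then obtain h n where hn: "h \<in> H" "h (map \<eta> [0..<n]) \<noteq> map \<eta> [0..<n]" "\<eta> \<in> tree_boundary T"
      by (auto simp: Fix_def)
    let ?C = "{\<zeta> \<in> tree_boundary T. (\<lambda>v. v = map \<eta> [0..<n]) (map \<zeta> [0..<n])}"
    have "openin (boundary_topology T) ?C" by (rule cyl_open)
    moreover have "\<eta> \<in> ?C" using hn by auto
    moreover have "?C \<subseteq> tree_boundary T - Fix T H"
    proof
      fix \<zeta> assume "\<zeta> \<in> ?C"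
      then have "map \<zeta> [0..<n] = map \<eta> [0..<n]" "\<zeta> \<in> tree_boundary T" by auto
      moreover have "\<zeta> \<notin> Fix T H"
      proof
        assume "\<zeta> \<in> Fix T H"
        then have "h (map \<zeta> [0..<n]) = map \<zeta> [0..<n]" using hn(1) unfolding Fix_def by blast
        then show False using hn(2) \<open>map \<zeta> [0..<n] = map \<eta> [0..<n]\<close> by simp
      qed
      ultimately show "\<zeta> \<in> tree_boundary T - Fix T H" by blast
    qed
    ultimately show "\<exists>T'. openin (boundary_topology T) T' \<and> \<eta> \<in> T' \<and> T' \<subseteq> tree_boundary T - Fix T H"
      by blast
  qed
qed



lemma level_finite:
  assumes "locally_finite_tree T"
  shows "finite {v\<in>T. length v = n}"
proof (induction n)
  case 0
  then show ?case by (rule finite_subset[of _ "{[]}"]) auto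
next
  case (Suc n)
  have "{v\<in>T. length v = Suc n} \<subseteq> (\<Union>w\<in>{v\<in>T. length v = n}. (\<lambda>a. w@[a]) ` {a. w@[a] \<in> T})"
  proof
    fix v assume v: "v \<in> {v\<in>T. length v = Suc n}"
    then have "v \<noteq> []" by auto
    then have e: "v = butlast v @ [last v]" by simp
    then have "butlast v \<in> T" using v assms
      unfolding locally_finite_tree_def rooted_tree_def by (metis mem_Collect_eq)
    then show "v \<in> (\<Union>w\<in>{v\<in>T. length v = n}. (\<lambda>a. w@[a]) ` {a. w@[a] \<in> T})"
      using v e by (intro UN_I[of "butlast v"]) (auto intro: image_eqI[of _ _ "last v"])
  qed
  moreover have "finite (\<Union>w\<in>{v\<in>T. length v = n}. (\<lambda>a. w@[a]) ` {a. w@[a] \<in> T})"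
    using Suc assms unfolding locally_finite_tree_def by auto
  ultimately show ?case by (rule finite_subset)
qed

lemma cyl_closed_prod:
  "closedin (product_topology (\<lambda>_. discrete_topology UNIV) UNIV) {\<eta>. Q (map \<eta> [0..<n])}"
proof -
  have "openin (product_topology (\<lambda>_. discrete_topology UNIV) UNIV) {\<eta>. (\<lambda>v. \<not> Q v) (map \<eta> [0..<n])}"
    by (rule cyl_open_prod)
  then show ?thesis unfolding closedin_def by (simp add: Collect_neg_eq Compl_eq_Diff_UNIV)
qed

lemma compact_bt:
  assumes "locally_finite_tree T"
  shows "compact_space (boundary_topology T)"
proof -
  let ?P = "product_topology (\<lambda>_::nat. discrete_topology (UNIV::'a set)) UNIV"
  define L where "L n = (\<lambda>v. v ! n) ` {v\<in>T. length v = Suc n}" for n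
  have sub: "tree_boundary T \<subseteq> PiE UNIV L"
  proof
    fix \<xi> assume "\<xi> \<in> tree_boundary T"
    then have "map \<xi> [0..<Suc n] \<in> T" for n unfolding tree_boundary_def by blast
    then have "\<xi> n \<in> L n" for n unfolding L_def
      by (intro image_eqI[of _ _ "map \<xi> [0..<Suc n]"]) (auto simp del: upt_Suc)
    then show "\<xi> \<in> PiE UNIV L" by auto
  qed
  have "compactin ?P (PiE UNIV L)"
    unfolding compactin_PiE
    using level_finite[OF assms] by (auto simp: L_def intro!: finite_imp_compactin)
  moreover have "closedin ?P (tree_boundary T)"
  proof -
    have "tree_boundary T = (\<Inter>n. {\<eta>. (\<lambda>v. v \<in> T) (map \<eta> [0..<n])})"
      by (auto simp: tree_boundary_def)
    moreover have "closedin ?P (\<Inter>n. {\<eta>. (\<lambda>v. v \<in> T) (map \<eta> [0..<n])})"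
      by (intro closedin_Inter) (auto intro: cyl_closed_prod)
    ultimately show ?thesis by simp
  qed
  ultimately have "compactin ?P (tree_boundary T)" using sub by (meson closed_compactin)
  then show ?thesis unfolding boundary_topology_def by (rule compact_space_subtopology)
qed




lemma rooted_take: "rooted_tree T \<Longrightarrow> v \<in> T \<Longrightarrow> take k v \<in> T"
proof (induction v rule: rev_induct)
  case Nil then show ?case by (simp add: rooted_tree_def)
next
  case (snoc a w)
  then have "w \<in> T" unfolding rooted_tree_def by blast
  show ?case
  proof (cases "k \<le> length w")
    case True then show ?thesis using snoc \<open>w \<in> T\<close> by simp
  next
    case False then show ?thesis using snoc by simp
  qed
qed

lemma aut_T: "g \<in> tree_aut T \<Longrightarrow> v \<in> T \<Longrightarrow> g v \<in> T"
  unfolding tree_aut_def bij_betw_def by auto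

lemma aut_inj: assumes "g \<in> tree_aut T" shows "inj g"
proof (rule injI)
  fix v w assume e: "g v = g w"
  have b: "bij_betw g T T" and o: "\<forall>v. v \<notin> T \<longrightarrow> g v = v" using assms by (auto simp: tree_aut_def)
  show "v = w"
  proof (cases "v \<in> T"; cases "w \<in> T")
    assume "v \<in> T" "w \<in> T" then show ?thesis using b e by (auto simp: bij_betw_def inj_on_def)
  next
    assume "v \<in> T" "w \<notin> T" then show ?thesis using e o aut_T[OF assms, of v] by auto
  next
    assume "v \<notin> T" "w \<in> T" then show ?thesis using e o aut_T[OF assms, of w] by auto
  next
    assume "v \<notin> T" "w \<notin> T" then show ?thesis using e o by auto
  qed
qed

lemma aut_len:
  assumes "rooted_tree T" "g \<in> tree_aut T" "v \<in> T"
  shows "length (g v) = length v \<and> (v \<noteq> [] \<longrightarrow> g (butlast v) = butlast (g v))"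
  using assms(3)
proof (induction v rule: rev_induct)
  case Nil then show ?case using assms(2) by (simp add: tree_aut_def)
next
  case (snoc a w)
  have wT: "w \<in> T" using snoc assms(1) unfolding rooted_tree_def by blast
  have IH: "length (g w) = length w" "w \<noteq> [] \<longrightarrow> g (butlast w) = butlast (g w)" using snoc wT by auto
  have "tree_adj T w (w@[a])" using wT snoc unfolding tree_adj_def by auto
  then have "tree_adj T (g w) (g (w@[a]))" using assms(2) wT snoc unfolding tree_aut_def by blast
  then obtain b where b: "g (w@[a]) = g w @ [b] \<or> g w = g (w@[a]) @ [b]" unfolding tree_adj_def by blast
  have g0: "g [] = []" using assms(2) by (simp add: tree_aut_def)
  show ?case
  proof (cases "g (w@[a]) = g w @ [b]")
    case True then show ?thesis using IH by simp
  next
    case False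
    then have e: "g w = g (w@[a]) @ [b]" using b by blast
    then have "w \<noteq> []" using g0 by auto
    then have "g (butlast w) = g (w@[a])" using IH e by simp
    then have bw: "butlast w = w@[a]" using aut_inj[OF assms(2)] by (simp add: inj_eq)
    have False using arg_cong[OF bw, of length] by simp
    then show ?thesis ..
  qed
qed

lemma aut_take:
  assumes "rooted_tree T" "g \<in> tree_aut T" "v \<in> T"
  shows "g (take k v) = take k (g v)"
  using assms(3)
proof (induction v arbitrary: k rule: rev_induct)
  case Nil then show ?case using assms(2) by (simp add: tree_aut_def)
next
  case (snoc a w)
  have wT: "w \<in> T" using snoc assms(1) unfolding rooted_tree_def by blast
  have L: "length (g (w@[a])) = Suc (length w)" "g w = butlast (g (w@[a]))"
    using aut_len[OF assms(1,2) snoc(2)] by auto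
  show ?case
  proof (cases "k \<le> length w")
    case True
    then have "take k (g (w@[a])) = take k (g w)" using L by (simp add: take_butlast)
    then show ?thesis using snoc.IH[OF wT] True by simp
  next
    case False then show ?thesis using L by simp
  qed
qed

definition ray_act :: "('a list \<Rightarrow> 'a list) \<Rightarrow> (nat \<Rightarrow> 'a) \<Rightarrow> (nat \<Rightarrow> 'a)" where
  "ray_act g \<xi> = (\<lambda>n. g (map \<xi> [0..<Suc n]) ! n)"

lemma ray_act_map:
  assumes "rooted_tree T" "g \<in> tree_aut T" "\<xi> \<in> tree_boundary T"
  shows "map (ray_act g \<xi>) [0..<n] = g (map \<xi> [0..<n])"
proof -
  have pT: "map \<xi> [0..<m] \<in> T" for m using assms(3) unfolding tree_boundary_def by blast
  have len: "length (g (map \<xi> [0..<n])) = n" using aut_len[OF assms(1,2) pT] by simp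
  show ?thesis
  proof (rule nth_equalityI)
    show "length (map (ray_act g \<xi>) [0..<n]) = length (g (map \<xi> [0..<n]))" using len by simp
  next
    fix i assume "i < length (map (ray_act g \<xi>) [0..<n])"
    then have i: "i < n" by simp
    have "map \<xi> [0..<Suc i] = take (Suc i) (map \<xi> [0..<n])" using i by (simp add: take_map)
    then have "g (map \<xi> [0..<Suc i]) = take (Suc i) (g (map \<xi> [0..<n]))"
      using aut_take[OF assms(1,2) pT] by simp
    then show "map (ray_act g \<xi>) [0..<n] ! i = g (map \<xi> [0..<n]) ! i"
      using i by (simp add: ray_act_def del: upt_Suc)
  qed
qed

lemma ray_act_boundary:
  assumes "rooted_tree T" "g \<in> tree_aut T" "\<xi> \<in> tree_boundary T"
  shows "ray_act g \<xi> \<in> tree_boundary T"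
  using ray_act_map[OF assms] aut_T[OF assms(2)] assms(3) unfolding tree_boundary_def by auto



locale P5 =
  fixes T :: "'a list set"
    and G :: "('a list \<Rightarrow> 'a list) set"
    and X :: "'x topology"
    and act :: "('a list \<Rightarrow> 'a list) \<Rightarrow> 'x \<Rightarrow> 'x"
    and \<Phi> :: "'x \<Rightarrow> ('a list \<Rightarrow> 'a list) set"
  assumes lf: "locally_finite_tree T"
    and sg: "is_subgroup G (tree_aut T)"
    and min: "minimal_G_space G X act"
    and phisg: "\<forall>x\<in>topspace X. is_subgroup (\<Phi> x) G"
    and equi: "\<forall>g\<in>G. \<forall>x\<in>topspace X. \<Phi> (act g x) = (\<lambda>h. g \<circ> h \<circ> inv g) ` \<Phi> x"
    and lsc: "\<forall>g\<in>G. openin X {x \<in> topspace X. g \<in> \<Phi> x}"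
begin

lemma rt: "rooted_tree T" using lf by (simp add: locally_finite_tree_def)

lemma phiG: "x \<in> topspace X \<Longrightarrow> \<Phi> x \<subseteq> G"
  using phisg by (simp add: is_subgroup_def)

lemma phiid: "x \<in> topspace X \<Longrightarrow> id \<in> \<Phi> x"
  using phisg by (simp add: is_subgroup_def)

lemma Gaut: "G \<subseteq> tree_aut T" using sg by (simp add: is_subgroup_def)

lemma Fix_single: "\<xi> \<in> Fix T {h} \<longleftrightarrow> \<xi> \<in> tree_boundary T \<and> (\<forall>n. h (map \<xi> [0..<n]) = map \<xi> [0..<n])"
  by (simp add: Fix_def)

lemma Fix_Inter: "H \<noteq> {} \<Longrightarrow> \<xi> \<in> Fix T H \<longleftrightarrow> (\<forall>h\<in>H. \<xi> \<in> Fix T {h})"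
  unfolding Fix_def by blast

lemma usc:
  assumes U: "openin (boundary_topology T) U" and x: "x \<in> topspace X"
    and sub: "Fix T (\<Phi> x) \<subseteq> U"
  shows "\<exists>V. openin X V \<and> x \<in> V \<and> (\<forall>y\<in>V. Fix T (\<Phi> y) \<subseteq> U)"
proof -
  let ?B = "boundary_topology T"
  define \<U> where "\<U> = (\<lambda>h. Fix T {h} - U) ` \<Phi> x"
  have cl: "\<forall>C\<in>\<U>. closedin ?B C" unfolding \<U>_def
  proof
    fix C assume "C \<in> (\<lambda>h. Fix T {h} - U) ` \<Phi> x"
    then obtain h where "C = Fix T {h} - U" by blast
    then show "closedin ?B C" using closed_Fix[of T "{h}"] U by (simp add: closedin_diff)
  qed
  have ne: "\<Phi> x \<noteq> {}" using phiid[OF x] by blast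
  have "\<Inter>\<U> = {}"
  proof (rule ccontr)
    assume "\<Inter>\<U> \<noteq> {}"
    then obtain \<xi> where \<xi>: "\<xi> \<in> \<Inter>\<U>" by blast
    then have a: "\<forall>h\<in>\<Phi> x. \<xi> \<in> Fix T {h} - U" unfolding \<U>_def by blast
    then have "\<xi> \<notin> U" using phiid[OF x] by blast
    moreover have "\<xi> \<in> Fix T (\<Phi> x)" using a Fix_Inter[OF ne] by blast
    ultimately show False using sub by blast
  qed
  then have "\<not> (\<forall>\<F>. finite \<F> \<and> \<F> \<subseteq> \<U> \<longrightarrow> \<Inter>\<F> \<noteq> {})"
    using compact_bt[OF lf, unfolded compact_space_fip, rule_format, of \<U>] cl by blast
  then obtain \<F> where F: "finite \<F>" "\<F> \<subseteq> \<U>" "\<Inter>\<F> = {}"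
    by blast
  then obtain K where K: "K \<subseteq> \<Phi> x" "finite K" "\<F> = (\<lambda>h. Fix T {h} - U) ` K"
    unfolding \<U>_def by (meson finite_subset_image)
  define V where "V = (\<Inter>h\<in>K. {y \<in> topspace X. h \<in> \<Phi> y}) \<inter> topspace X"
  have "openin X V" unfolding V_def
  proof (rule openin_INT)
    show "finite K" by fact
    fix h assume "h \<in> K"
    then have "h \<in> G" using K(1) phiG[OF x] by blast
    then show "openin X {y \<in> topspace X. h \<in> \<Phi> y}" using lsc by blast
  qed
  moreover have "x \<in> V" using K x unfolding V_def by auto
  moreover have "\<forall>y\<in>V. Fix T (\<Phi> y) \<subseteq> U"
  proof (intro ballI subsetI)
    fix y \<xi> assume y: "y \<in> V" and \<xi>: "\<xi> \<in> Fix T (\<Phi> y)"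
    have yt: "y \<in> topspace X" using y unfolding V_def by blast
    show "\<xi> \<in> U"
    proof (rule ccontr)
      assume nU: "\<xi> \<notin> U"
      have "K \<subseteq> \<Phi> y" using y unfolding V_def by blast
      then have "\<forall>h\<in>K. \<xi> \<in> Fix T {h}" using \<xi> Fix_Inter[of "\<Phi> y"] phiid[OF yt] by blast
      then have "\<forall>C\<in>\<F>. \<xi> \<in> C" using nU K(3) by blast
      then have "\<xi> \<in> \<Inter>\<F>" by blast
      then show False using F by blast
    qed
  qed
  ultimately show ?thesis by blast
qed


definition Sn :: "nat \<Rightarrow> 'x \<Rightarrow> 'a list set" where
  "Sn n x = {v. \<exists>\<xi>\<in>Fix T (\<Phi> x). map \<xi> [0..<n] = v}"

lemma Sn_finite: "finite (Sn n x)"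
proof (rule finite_subset[OF _ level_finite[OF lf, of n]])
  show "Sn n x \<subseteq> {v\<in>T. length v = n}"
  proof
    fix v assume "v \<in> Sn n x"
    then obtain \<xi> where \<xi>: "\<xi> \<in> tree_boundary T" "map \<xi> [0..<n] = v"
      unfolding Sn_def Fix_def by blast
    then have "v \<in> T" unfolding tree_boundary_def by blast
    then show "v \<in> {v\<in>T. length v = n}" using \<xi>(2) by auto
  qed
qed


lemma Sn_usc:
  assumes x: "x \<in> topspace X"
  shows "\<exists>V. openin X V \<and> x \<in> V \<and> (\<forall>y\<in>V. Sn n y \<subseteq> Sn n x)"
proof -
  define U where "U = {\<eta> \<in> tree_boundary T. (\<lambda>v. v \<in> Sn n x) (map \<eta> [0..<n])}"
  have "openin (boundary_topology T) U" unfolding U_def by (rule cyl_open)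
  moreover have "Fix T (\<Phi> x) \<subseteq> U"
  proof
    fix \<xi> assume h: "\<xi> \<in> Fix T (\<Phi> x)"
    then have "\<xi> \<in> tree_boundary T" by (simp add: Fix_def)
    moreover have "map \<xi> [0..<n] \<in> Sn n x" unfolding Sn_def using h by blast
    ultimately show "\<xi> \<in> U" unfolding U_def by blast
  qed
  ultimately obtain V where V: "openin X V" "x \<in> V" "\<forall>y\<in>V. Fix T (\<Phi> y) \<subseteq> U"
    using usc[OF _ x] by metis
  have "\<forall>y\<in>V. Sn n y \<subseteq> Sn n x"
  proof (intro ballI subsetI)
    fix y v assume y: "y \<in> V" and v: "v \<in> Sn n y"
    then obtain \<xi> where \<xi>: "\<xi> \<in> Fix T (\<Phi> y)" "map \<xi> [0..<n] = v" unfolding Sn_def by blast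
    then have "\<xi> \<in> U" using V(3) y by blast
    then show "v \<in> Sn n x" using \<xi>(2) unfolding U_def by blast
  qed
  then show ?thesis using V by blast
qed


lemma Sn_equiv:
  assumes g: "g \<in> G" and x: "x \<in> topspace X"
  shows "g ` Sn n x \<subseteq> Sn n (act g x)"
proof
  fix w assume "w \<in> g ` Sn n x"
  then obtain \<xi> where \<xi>: "\<xi> \<in> Fix T (\<Phi> x)" "w = g (map \<xi> [0..<n])" unfolding Sn_def by blast
  have ga: "g \<in> tree_aut T" using g Gaut by blast
  have ig: "inj g" by (rule aut_inj[OF ga])
  have \<xi>b: "\<xi> \<in> tree_boundary T" using \<xi> by (simp add: Fix_def)
  have rm: "\<And>m. map (ray_act g \<xi>) [0..<m] = g (map \<xi> [0..<m])" by (rule ray_act_map[OF rt ga \<xi>b])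
  have eq: "\<Phi> (act g x) = (\<lambda>h. g \<circ> h \<circ> inv g) ` \<Phi> x" using equi g x by blast
  have "ray_act g \<xi> \<in> Fix T (\<Phi> (act g x))"
    unfolding Fix_def
  proof (intro CollectI conjI ballI allI)
    show "ray_act g \<xi> \<in> tree_boundary T" by (rule ray_act_boundary[OF rt ga \<xi>b])
    fix h m assume "h \<in> \<Phi> (act g x)"
    then obtain k where k: "k \<in> \<Phi> x" "h = g \<circ> k \<circ> inv g" using eq by blast
    have kf: "k (map \<xi> [0..<m]) = map \<xi> [0..<m]" using \<xi>(1) k(1) unfolding Fix_def by blast
    have "h (map (ray_act g \<xi>) [0..<m]) = g (k (inv g (g (map \<xi> [0..<m]))))"
      unfolding rm k(2) by simp
    also have "\<dots> = g (map \<xi> [0..<m])" using ig kf by (simp add: inv_f_f)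
    finally show "h (map (ray_act g \<xi>) [0..<m]) = map (ray_act g \<xi>) [0..<m]" unfolding rm .
  qed
  moreover have "map (ray_act g \<xi>) [0..<n] = w" using rm \<xi>(2) by simp
  ultimately show "w \<in> Sn n (act g x)" unfolding Sn_def by blast
qed


lemma act_top: "g \<in> G \<Longrightarrow> x \<in> topspace X \<Longrightarrow> act g x \<in> topspace X"
  using min unfolding minimal_G_space_def G_space_def continuous_map_def by blast

lemma card_le:
  assumes x: "x \<in> topspace X" and y: "y \<in> topspace X"
  shows "card (Sn n x) \<le> card (Sn n y)"
proof -
  define c where "c = card (Sn n x)"
  define Y where "Y = {z \<in> topspace X. c \<le> card (Sn n z)}"
  have "openin X (topspace X - Y)"
  proof (subst openin_subopen, intro ballI)
    fix z assume z: "z \<in> topspace X - Y"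
    obtain V where V: "openin X V" "z \<in> V" "\<forall>w\<in>V. Sn n w \<subseteq> Sn n z"
      using Sn_usc[of z n] z by blast
    have cz: "card (Sn n z) < c" using z unfolding Y_def by auto
    have "V \<subseteq> topspace X - Y"
    proof
      fix w assume w: "w \<in> V"
      then have "card (Sn n w) \<le> card (Sn n z)" using V(3) Sn_finite by (simp add: card_mono)
      then have "\<not> c \<le> card (Sn n w)" using cz by linarith
      moreover have "w \<in> topspace X" using w V(1) openin_subset by blast
      ultimately show "w \<in> topspace X - Y" unfolding Y_def by blast
    qed
    then show "\<exists>T'. openin X T' \<and> z \<in> T' \<and> T' \<subseteq> topspace X - Y" using V by blast
  qed
  then have "closedin X Y" unfolding closedin_def Y_def by auto
  moreover have "Y \<noteq> {}" using x unfolding Y_def c_def by auto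
  moreover have "\<forall>g\<in>G. act g ` Y \<subseteq> Y"
  proof (intro ballI subsetI)
    fix g w assume g: "g \<in> G" and "w \<in> act g ` Y"
    then obtain z where z: "z \<in> Y" "w = act g z" by blast
    have zt: "z \<in> topspace X" using z by (simp add: Y_def)
    have cz: "c \<le> card (Sn n z)" using z by (simp add: Y_def)
    have "inj g" using g Gaut aut_inj by blast
    then have "card (g ` Sn n z) = card (Sn n z)" by (simp add: card_image inj_on_subset)
    moreover have "card (g ` Sn n z) \<le> card (Sn n (act g z))"
      using Sn_equiv[OF g zt] Sn_finite by (simp add: card_mono)
    ultimately have "c \<le> card (Sn n (act g z))" using cz by linarith
    then show "w \<in> Y" using z(2) act_top[OF g zt] unfolding Y_def by blast
  qed
  ultimately have "Y = topspace X" using min unfolding minimal_G_space_def by blast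
  then show ?thesis using y unfolding Y_def c_def by blast
qed

lemma A_open: "openin X {x \<in> topspace X. v \<in> Sn n x}"
proof (subst openin_subopen, intro ballI)
  fix x assume x: "x \<in> {x \<in> topspace X. v \<in> Sn n x}"
  have xt: "x \<in> topspace X" and vx: "v \<in> Sn n x" using x by auto
  obtain V where V: "openin X V" "x \<in> V" "\<forall>w\<in>V. Sn n w \<subseteq> Sn n x" using Sn_usc[OF xt] by blast
  have "V \<subseteq> {x \<in> topspace X. v \<in> Sn n x}"
  proof
    fix w assume w: "w \<in> V"
    then have wt: "w \<in> topspace X" using V(1) openin_subset by blast
    have s: "Sn n w \<subseteq> Sn n x" using V(3) w by blast
    have "Sn n w = Sn n x"
      using card_subset_eq[OF Sn_finite s] card_le[OF xt wt, of n] card_mono[OF Sn_finite s] by linarith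
    then show "w \<in> {x \<in> topspace X. v \<in> Sn n x}" using vx wt by simp
  qed
  then show "\<exists>T'. openin X T' \<and> x \<in> T' \<and> T' \<subseteq> {x \<in> topspace X. v \<in> Sn n x}" using V by blast
qed


lemma cont: "continuous_map X (vietoris (boundary_topology T)) (\<lambda>x. Fix T (\<Phi> x))"
  unfolding vietoris_def
proof (rule continuous_on_generated_topo)
  let ?B = "boundary_topology T"
  let ?f = "\<lambda>x. Fix T (\<Phi> x)"
  fix U assume "U \<in> {{F. closedin ?B F \<and> F \<subseteq> W} | W. openin ?B W}
      \<union> {{F. closedin ?B F \<and> F \<inter> W \<noteq> {}} | W. openin ?B W}"
  then consider W where "openin ?B W" "U = {F. closedin ?B F \<and> F \<subseteq> W}"
    | W where "openin ?B W" "U = {F. closedin ?B F \<and> F \<inter> W \<noteq> {}}" by blast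
  then show "openin X (?f -` U \<inter> topspace X)"
  proof cases
    case 1
    have e: "?f -` U \<inter> topspace X = {x \<in> topspace X. Fix T (\<Phi> x) \<subseteq> W}"
      using 1(2) closed_Fix by auto
    show ?thesis unfolding e
    proof (subst openin_subopen, intro ballI)
      fix x assume x: "x \<in> {x \<in> topspace X. Fix T (\<Phi> x) \<subseteq> W}"
      then obtain V where V: "openin X V" "x \<in> V" "\<forall>y\<in>V. Fix T (\<Phi> y) \<subseteq> W"
        using usc[OF 1(1)] by blast
      have "V \<subseteq> {x \<in> topspace X. Fix T (\<Phi> x) \<subseteq> W}" using V openin_subset by blast
      then show "\<exists>T'. openin X T' \<and> x \<in> T' \<and> T' \<subseteq> {x \<in> topspace X. Fix T (\<Phi> x) \<subseteq> W}"
        using V by blast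
    qed
  next
    case 2
    have e: "?f -` U \<inter> topspace X = {x \<in> topspace X. Fix T (\<Phi> x) \<inter> W \<noteq> {}}"
      using 2(2) closed_Fix by auto
    show ?thesis unfolding e
    proof (subst openin_subopen, intro ballI)
      fix x assume x: "x \<in> {x \<in> topspace X. Fix T (\<Phi> x) \<inter> W \<noteq> {}}"
      then obtain \<xi> where \<xi>: "\<xi> \<in> Fix T (\<Phi> x)" "\<xi> \<in> W" by blast
      obtain n where n: "\<forall>\<eta>\<in>tree_boundary T. map \<eta> [0..<n] = map \<xi> [0..<n] \<longrightarrow> \<eta> \<in> W"
        using open_cyl[OF 2(1) \<xi>(2)] by blast
      define A where "A = {x \<in> topspace X. map \<xi> [0..<n] \<in> Sn n x}"
      have "openin X A" unfolding A_def by (rule A_open)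
      moreover have "x \<in> A" using x \<xi>(1) unfolding A_def Sn_def by blast
      moreover have "A \<subseteq> {x \<in> topspace X. Fix T (\<Phi> x) \<inter> W \<noteq> {}}"
      proof
        fix y assume "y \<in> A"
        then have yt: "y \<in> topspace X" and "map \<xi> [0..<n] \<in> Sn n y" unfolding A_def by auto
        then obtain \<eta> where \<eta>: "\<eta> \<in> Fix T (\<Phi> y)" "map \<eta> [0..<n] = map \<xi> [0..<n]"
          unfolding Sn_def by blast
        have "\<eta> \<in> tree_boundary T" using \<eta>(1) by (simp add: Fix_def)
        then have "\<eta> \<in> W" using n \<eta>(2) by blast
        then show "y \<in> {x \<in> topspace X. Fix T (\<Phi> x) \<inter> W \<noteq> {}}" using yt \<eta>(1) by blast
      qed
      ultimately show "\<exists>T'. openin X T' \<and> x \<in> T' \<and> T' \<subseteq> {x \<in> topspace X. Fix T (\<Phi> x) \<inter> W \<noteq> {}}"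
        by blast
    qed
  qed
next
  let ?B = "boundary_topology T"
  show "(\<lambda>x. Fix T (\<Phi> x)) ` topspace X \<subseteq> \<Union> ({{F. closedin ?B F \<and> F \<subseteq> W} | W. openin ?B W}
      \<union> {{F. closedin ?B F \<and> F \<inter> W \<noteq> {}} | W. openin ?B W})"
  proof
    fix F assume "F \<in> (\<lambda>x. Fix T (\<Phi> x)) ` topspace X"
    then obtain x where "F = Fix T (\<Phi> x)" by blast
    then have c: "closedin ?B F" using closed_Fix by simp
    then have m: "F \<in> {F. closedin ?B F \<and> F \<subseteq> topspace ?B}" by (simp add: closedin_subset)
    have m2: "{F. closedin ?B F \<and> F \<subseteq> topspace ?B} \<in> {{F. closedin ?B F \<and> F \<subseteq> W} | W. openin ?B W}"
      by (rule CollectI, rule exI[of _ "topspace ?B"]) simp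
    show "F \<in> \<Union> ({{F. closedin ?B F \<and> F \<subseteq> W} | W. openin ?B W}
      \<union> {{F. closedin ?B F \<and> F \<inter> W \<noteq> {}} | W. openin ?B W})"
      by (rule UnionI[OF UnI1[OF m2] m])
  qed
qed


end


theorem proposition5p27:
  fixes T :: "'a list set"
    and G :: "('a list \<Rightarrow> 'a list) set"
    and X :: "'x topology"
    and act :: "('a list \<Rightarrow> 'a list) \<Rightarrow> 'x \<Rightarrow> 'x"
    and \<Phi> :: "'x \<Rightarrow> ('a list \<Rightarrow> 'a list) set"
  assumes "locally_finite_tree T"
    and "is_subgroup G (tree_aut T)"
    and "compact_space X" and "Hausdorff_space X"
    and "minimal_G_space G X act"
    and "\<forall>x\<in>topspace X. is_subgroup (\<Phi> x) G"
    and "\<forall>g\<in>G. \<forall>x\<in>topspace X. \<Phi> (act g x) = (\<lambda>h. g \<circ> h \<circ> inv g) ` \<Phi> x"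
    and "\<forall>g\<in>G. openin X {x \<in> topspace X. g \<in> \<Phi> x}"
  shows "continuous_map X (vietoris (boundary_topology T)) (\<lambda>x. Fix T (\<Phi> x))"
proof -
  interpret P5 T G X act \<Phi>
    using assms(1,2,5,6,7,8) by (unfold_locales) auto
  show ?thesis by (rule cont)
qed

end
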